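(* Let $\sigma>0$, $b:\mathbb R^d\to\mathbb R^d$, and let $\kappa:(0,\infty)\to\mathbb R$ satisfy $\kappa(r)\le\inf\{-\frac{2}{\sigma^2}\frac{(x-y)\cdot(b(x)-b(y))}{|x-y|^2}: x,y\in\mathbb R^d,\ |x-y|=r\}$, and suppose $\kappa$ is continuous on $(0,\infty)$, bounded below on $(0,\infty)$, and $\liminf_{r\to\infty}\kappa(r)>0$. Then there exists a function $f:[0,\infty)\to\mathbb R$ such that: 1. $f(0)=0$, and $f$ is concave and strictly increasing on $[0,\infty)$; 2. $f\in C^2[0,\infty)$ and there exists a constant $c_0>0$ such that $f''(r)-\frac14 r\kappa(r)f'(r)\le-\frac{c_0}{2}f(r)$ for all $r\ge0$; 3. there exists a constant $\varphi_0>0$ such that $\frac{\varphi_0}{4}r\le f(r)\le r$ for all $r\ge0$. The constants $c_0,\varphi_0$ depend only on the function $\kappa$.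
   Context: At $r=0$, where $\kappa$ is undefined, the term $\frac14 r\kappa(r)f'(r)$ is interpreted as $0$. *)

theory Defs
  imports "HOL-Analysis.Analysis"
begin

end

theory Submission
  imports Defs
begin

lemma core:
  fixes \<kappa> :: "real \<Rightarrow> real" and M R k :: real
  assumes M: "M \<ge> 0" and R: "R > 0" and k: "k > 0"
    and lowM: "\<And>r. r > 0 \<Longrightarrow> -M \<le> \<kappa> r"
    and lowk: "\<And>r. r \<ge> R \<Longrightarrow> k \<le> \<kappa> r"
  shows "\<exists>f f' f'' c0 \<phi>0.
           f 0 = 0 \<and> concave_on {0..} f \<and> strict_mono_on {0..} f \<and>
           (\<forall>r\<ge>0. (f has_real_derivative f' r) (at r within {0..})) \<and>
           (\<forall>r\<ge>0. (f' has_real_derivative f'' r) (at r within {0..})) \<and>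
           continuous_on {0..} f'' \<and>
           c0 > 0 \<and>
           (\<forall>r\<ge>0. f'' r - (if r = 0 then 0 else (1/4) * r * \<kappa> r * f' r) \<le> - (c0 / 2) * f r) \<and>
           \<phi>0 > 0 \<and>
           (\<forall>r\<ge>0. \<phi>0 / 4 * r \<le> f r \<and> f r \<le> r)"
proof -
  define B where "B = M * R / 4 + 1"
  define E where "E = exp (- B * R)"
  define \<phi> where "\<phi> = min (1/4) (E / (M * R + 1))"
  define c0 where "c0 = min (E / R) (k * \<phi> / 2)"
  define f where "f = (\<lambda>r. \<phi> * r + (1 - \<phi>) * (1 - exp (- B * r)) / B)"
  define g where "g = (\<lambda>r. \<phi> + (1 - \<phi>) * exp (- B * r))"
  define h where "h = (\<lambda>r. - (1 - \<phi>) * B * exp (- B * r))"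
  have B: "B \<ge> 1" using M R unfolding B_def by simp
  have E: "E > 0" unfolding E_def by simp
  have MR: "M * R \<ge> 0" using M R by simp
  have phipos: "\<phi> > 0" unfolding \<phi>_def using E MR by simp
  have phi14: "\<phi> \<le> 1/4" unfolding \<phi>_def by (rule min.cobounded1)
  have phiMR: "\<phi> * (M * R) \<le> E"
  proof -
    have "\<phi> * (M * R) \<le> E / (M * R + 1) * (M * R)"
      by (rule mult_right_mono) (auto simp: \<phi>_def MR)
    also have "\<dots> \<le> E" using E MR by (simp add: field_simps)
    finally show ?thesis .
  qed
  have c0pos: "c0 > 0" unfolding c0_def using E R k phipos by simp
  have df: "(f has_real_derivative g r) (at r)" for r
    unfolding f_def g_def using B
    by (auto intro!: derivative_eq_intros simp: field_simps)
  have dg: "(g has_real_derivative h r) (at r)" for r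
    unfolding g_def h_def
    by (auto intro!: derivative_eq_intros simp: field_simps)
  have gpos: "g r > 0" for r unfolding g_def using phipos phi14
    by (simp add: add_pos_nonneg)
  have hle: "h r \<le> 0" for r unfolding h_def using phi14 B by (simp add: mult_nonneg_nonneg mult_nonpos_nonneg)
  have gdec: "x \<le> y \<Longrightarrow> g y \<le> g x" for x y
    unfolding g_def using phi14 B by (auto intro!: mult_left_mono)
  have fle: "f r \<le> r" if "r \<ge> 0" for r
  proof -
    have "1 - exp (- B * r) \<le> B * r" using exp_ge_add_one_self[of "- B * r"] by simp
    hence "(1 - exp (- B * r)) / B \<le> r" using B by (simp add: divide_le_eq mult.commute)
    hence "(1 - \<phi>) * ((1 - exp (- B * r)) / B) \<le> (1 - \<phi>) * r"
      using phi14 by (intro mult_left_mono) auto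
    thus ?thesis unfolding f_def by (simp add: algebra_simps)
  qed
  have fge: "\<phi> * r \<le> f r" if "r \<ge> 0" for r
  proof -
    have "exp (- B * r) \<le> 1" using B that by simp
    hence "0 \<le> (1 - \<phi>) * (1 - exp (- B * r)) / B" using phi14 B by simp
    thus ?thesis unfolding f_def by simp
  qed
  have fnn: "0 \<le> f r" if "r \<ge> 0" for r
    using fge[OF that] phipos that by (meson mult_nonneg_nonneg less_imp_le order_trans)
  have conc: "concave_on {0..} f"
    unfolding concave_on_def
  proof (rule convex_on_realI[where f' = "\<lambda>x. - g x"])
    show "connected {0::real..}" by simp
    show "((\<lambda>x. - f x) has_real_derivative - g x) (at x)" for x
      using df by (auto intro!: derivative_eq_intros)
    show "- g x \<le> - g y" if "x \<le> y" for x y using gdec[OF that] by simp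
  qed
  have smono: "strict_mono_on {0..} f"
  proof (rule strict_mono_onI)
    fix x y :: real assume "x \<in> {0..}" "y \<in> {0..}" "x < y"
    have "exp (- B * y) < exp (- B * x)" using B \<open>x < y\<close> by simp
    hence "(1 - exp (- B * x)) / B \<le> (1 - exp (- B * y)) / B" using B
      by (intro divide_right_mono) auto
    hence "(1 - \<phi>) * ((1 - exp (- B * x)) / B) \<le> (1 - \<phi>) * ((1 - exp (- B * y)) / B)"
      using phi14 by (intro mult_left_mono) auto
    thus "f x < f y" unfolding f_def using mult_strict_left_mono[OF \<open>x < y\<close> phipos] by (simp only: times_divide_eq_right)
  qed
  have main: "h r - (if r = 0 then 0 else (1/4) * r * \<kappa> r * g r) \<le> - (c0 / 2) * f r"
    if r: "r \<ge> 0" for r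
  proof (cases "r = 0")
    case True thus ?thesis using hle by (simp add: f_def)
  next
    case False
    hence rp: "r > 0" using r by simp
    show ?thesis
    proof (cases "r \<ge> R")
      case True
      have "(1/4) * r * k * \<phi> \<le> (1/4) * r * \<kappa> r * g r"
      proof -
        have "k * \<phi> \<le> \<kappa> r * g r"
          using lowk[OF True] k gpos[of r] phipos phi14
          by (intro mult_mono) (auto simp: g_def)
        thus ?thesis using rp by simp
      qed
      moreover have "(c0 / 2) * f r \<le> (1/4) * r * k * \<phi>"
      proof -
        have "(c0/2) * f r \<le> (k * \<phi> / 4) * r"
          using fle[OF r] fge[OF r] phipos c0pos fnn[OF r]
          by (intro mult_mono) (auto simp: c0_def)
        thus ?thesis by (simp add: mult_ac)
      qed
      ultimately show ?thesis using hle[of r] False by simp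
    next
      case False
      hence rR: "r < R" by simp
      have e1: "exp (- B * R) \<le> exp (- B * r)" using B rR by simp
      have er: "exp (- B * r) \<le> 1" using B rp by simp
      have "- ((1/4) * r * \<kappa> r * g r) \<le> (M/4) * r * g r"
      proof -
        have "- \<kappa> r * g r \<le> M * g r" using lowM[OF rp] gpos[of r]
          by (intro mult_right_mono) auto
        hence "r * (- \<kappa> r * g r) \<le> r * (M * g r)" using rp by (intro mult_left_mono) auto
        thus ?thesis by (simp add: algebra_simps)
      qed
      moreover have "h r + (M/4) * r * g r \<le> - E / 2"
      proof -
        have "h r + (M/4) * r * g r
              = (1 - \<phi>) * exp (- B * r) * (M/4 * r - B) + (M/4) * r * \<phi>"
          unfolding h_def g_def by (simp add: algebra_simps)
        also have "\<dots> \<le> (1 - \<phi>) * exp (- B * r) * (-1) + (M/4) * R * \<phi>"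
        proof -
          have "M/4 * r \<le> M/4 * R" using M rR by (intro mult_left_mono) auto
          hence "M/4 * r - B \<le> -1" unfolding B_def by simp
          hence a: "(1 - \<phi>) * exp (- B * r) * (M/4 * r - B) \<le> (1 - \<phi>) * exp (- B * r) * (-1)"
            using phi14 by (intro mult_left_mono) auto
          have "(M/4) * r * \<phi> \<le> (M/4) * R * \<phi>" using M rR phipos
            by (intro mult_right_mono mult_left_mono) auto
          with a show ?thesis by linarith
        qed
        also have "\<dots> \<le> - (3/4) * E + E / 4"
        proof -
          have "(3/4) * E \<le> (1 - \<phi>) * exp (- B * r)"
            using phi14 e1 E unfolding E_def by (intro mult_mono) auto
          moreover have "(M/4) * R * \<phi> \<le> E / 4" using phiMR by (simp add: algebra_simps)
          ultimately show ?thesis by simp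
        qed
        finally show ?thesis by simp
      qed
      moreover have "(c0 / 2) * f r \<le> E / 2"
      proof -
        have "c0 * f r \<le> (E / R) * R"
          using fle[OF r] fge[OF r] phipos c0pos fnn[OF r] rR rp
          by (intro mult_mono) (auto simp: c0_def)
        thus ?thesis using R by simp
      qed
      ultimately show ?thesis using rp by simp
    qed
  qed
  show ?thesis
    apply (rule exI[of _ f], rule exI[of _ g], rule exI[of _ h], rule exI[of _ c0], rule exI[of _ \<phi>])
    apply (intro conjI allI impI)
    subgoal by (simp add: f_def)
    subgoal by (rule conc)
    subgoal by (rule smono)
    subgoal for r using df by (rule has_field_derivative_at_within)
    subgoal for r using dg by (rule has_field_derivative_at_within)
    subgoal unfolding h_def by (intro continuous_intros)
    subgoal by (rule c0pos)
    subgoal for r using main by simp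
    subgoal by (rule phipos)
    subgoal for r using fge[of r] fnn[of r] by simp
    subgoal for r using fle by simp
    done
qed

theorem lemma1:
  fixes \<sigma> :: real and b :: "'a::euclidean_space \<Rightarrow> 'a" and \<kappa> :: "real \<Rightarrow> real"
  assumes sigma_pos: "\<sigma> > 0"
    and kappa_bound: "\<And>r x y. r > 0 \<Longrightarrow> norm (x - y) = r \<Longrightarrow>
           \<kappa> r \<le> - (2 / \<sigma>\<^sup>2) * (((x - y) \<bullet> (b x - b y)) / (norm (x - y))\<^sup>2)"
    and kappa_cont: "continuous_on {0<..} \<kappa>"
    and kappa_bdd_below: "\<exists>m. \<forall>r>0. m \<le> \<kappa> r"
    and kappa_liminf: "Liminf at_top (\<lambda>r. ereal (\<kappa> r)) > 0"
  shows "\<exists>f f' f'' c0 \<phi>0.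
           f 0 = 0 \<and> concave_on {0..} f \<and> strict_mono_on {0..} f \<and>
           (\<forall>r\<ge>0. (f has_real_derivative f' r) (at r within {0..})) \<and>
           (\<forall>r\<ge>0. (f' has_real_derivative f'' r) (at r within {0..})) \<and>
           continuous_on {0..} f'' \<and>
           c0 > 0 \<and>
           (\<forall>r\<ge>0. f'' r - (if r = 0 then 0 else (1/4) * r * \<kappa> r * f' r) \<le> - (c0 / 2) * f r) \<and>
           \<phi>0 > 0 \<and>
           (\<forall>r\<ge>0. \<phi>0 / 4 * r \<le> f r \<and> f r \<le> r)"
proof -
  obtain m where m: "\<And>r. r > 0 \<Longrightarrow> m \<le> \<kappa> r" using kappa_bdd_below by blast
  obtain k :: real where k0: "0 < ereal k" and kl: "ereal k < Liminf at_top (\<lambda>r. ereal (\<kappa> r))"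
    using ereal_dense2[OF kappa_liminf] by blast
  have "eventually (\<lambda>r. ereal k < ereal (\<kappa> r)) at_top" using less_LiminfD[OF kl] .
  then obtain N where N: "\<And>r. r \<ge> N \<Longrightarrow> k < \<kappa> r" by (auto simp: eventually_at_top_linorder)
  show ?thesis
  proof (rule core[where M = "max 0 (- m)" and R = "max N 1" and k = k])
    show "k > 0" using k0 by simp
    show "- max 0 (- m) \<le> \<kappa> r" if "r > 0" for r using m[OF that] by simp
    show "k \<le> \<kappa> r" if "max N 1 \<le> r" for r using N[of r] that by simp
  qed auto
qed

end
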